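(* For a planted $K$-path, the likelihood ratio is \[ L(G)=\frac{\mathbb{P}_1(G)}{\mathbb{P}_0(G)}=\frac{1}{n(n-1)\cdots(n-K+1)}\,\bigl|\{K\text{-paths in }G\}\bigr|\,\Bigl(\frac{\lambda}{n}\Bigr)^{-K+1}. \] Moreover $\mathbb{E}_0(L^2)=\mathbb{E}_0(x^S)$, where $x=n/\lambda$ and $S$ is the number of edges common to the $K$-path $(1-2-\cdots-K)$ and a $K$-path $\pi$ chosen uniformly at random among the $n(n-1)\cdots(n-K+1)$ possible $K$-paths on node set $[n]$.
   Context: Model: $n$ nodes, $\lambda>0$. $\mathbb{P}_0$: $G\sim\mathcal G(n,\lambda/n)$. $\mathbb{P}_1$: $G=G_0\cup G'$ with $G_0\sim\mathcal G(n,\lambda/n)$ and $G'$ the image of the path $1-2-\cdots-K$ under a uniformly random injection $[K]\to[n]$ independent of $G_0$. An ordered set $(i_1,\dots,i_K)$ of $K$ distinct nodes of $[n]$ is a $K$-path in $G$ if the edges $(i_\ell,i_{\ell+1})$, $\ell=1,\dots,K-1$, are all present in $G$; $K$-paths are counted as ordered sequences. $\mathbb{E}_0$ is expectation under $\mathbb{P}_0$. *)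

theory Defs
  imports "HOL-Probability.Probability"
begin

definition all_edges :: "nat \<Rightarrow> nat set set" where
  "all_edges n = {e. \<exists>i j. i < n \<and> j < n \<and> i \<noteq> j \<and> e = {i, j}}"

definition er_graph :: "nat \<Rightarrow> real \<Rightarrow> nat set set pmf" where
  "er_graph n p =
     map_pmf (\<lambda>f. {e \<in> all_edges n. f e})
       (Pi_pmf (all_edges n) False (\<lambda>_. bernoulli_pmf p))"

text \<open>Ordered sequences of K distinct nodes of [n] (= injections [K] -> [n]).\<close>
definition seqs :: "nat \<Rightarrow> nat \<Rightarrow> nat list set" where
  "seqs n K = {xs. length xs = K \<and> distinct xs \<and> set xs \<subseteq> {..<n}}"

definition path_edges :: "nat list \<Rightarrow> nat set set" where
  "path_edges xs = {{xs ! l, xs ! (l + 1)} | l. l + 1 < length xs}"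

text \<open>K-paths in G, counted as ordered sequences.\<close>
definition K_paths :: "nat \<Rightarrow> nat \<Rightarrow> nat set set \<Rightarrow> nat list set" where
  "K_paths n K G = {xs \<in> seqs n K. \<forall>l. l + 1 < K \<longrightarrow> {xs ! l, xs ! (l + 1)} \<in> G}"

definition P0 :: "nat \<Rightarrow> real \<Rightarrow> nat set set pmf" where
  "P0 n lam = er_graph n (lam / real n)"

definition P1 :: "nat \<Rightarrow> nat \<Rightarrow> real \<Rightarrow> nat set set pmf" where
  "P1 n K lam =
     do { G0 \<leftarrow> er_graph n (lam / real n);
          \<sigma> \<leftarrow> pmf_of_set (seqs n K);
          return_pmf (G0 \<union> path_edges \<sigma>) }"

definition LR :: "nat \<Rightarrow> nat \<Rightarrow> real \<Rightarrow> nat set set \<Rightarrow> real" where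
  "LR n K lam G = pmf (P1 n K lam) G / pmf (P0 n lam) G"

end

theory Submission
  imports Defs
begin

definition erA :: "nat set set \<Rightarrow> real \<Rightarrow> nat set set pmf" where
  "erA A p = map_pmf (\<lambda>f. {e \<in> A. f e}) (Pi_pmf A False (\<lambda>_. bernoulli_pmf p))"

lemma bern_meas:
  assumes "0 \<le> p" "p \<le> 1"
  shows "measure_pmf.prob (bernoulli_pmf p) UNIV = 1"
    "measure_pmf.prob (bernoulli_pmf p) {True} = p"
    "measure_pmf.prob (bernoulli_pmf p) {False} = 1 - p"
  using assms by (simp_all add: measure_pmf_single)

lemma erA_single:
  assumes "finite A" "G \<subseteq> A" "0 \<le> p" "p \<le> 1"
  shows "pmf (erA A p) G = p ^ card G * (1 - p) ^ (card A - card G)"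
proof -
  have pre: "(\<lambda>f. {e \<in> A. f e}) -` {G} = Pi A (\<lambda>e. {e \<in> G})"
    using assms(2) by (auto simp: Pi_def)
  have "pmf (erA A p) G = (\<Prod>e\<in>A. measure_pmf.prob (bernoulli_pmf p) {e \<in> G})"
    unfolding erA_def pmf_map pre by (rule measure_Pi_pmf_Pi[OF assms(1)])
  also have "\<dots> = (\<Prod>e\<in>A. if e \<in> G then p else 1 - p)"
    by (rule prod.cong) (auto simp: bern_meas[OF assms(3,4)])
  also have "\<dots> = p ^ card (A \<inter> {e. e \<in> G}) * (1 - p) ^ card (A \<inter> - {e. e \<in> G})"
    using assms(1) by (simp add: prod.If_cases)
  also have "A \<inter> {e. e \<in> G} = G" using assms(2) by auto
  also have "A \<inter> - {e. e \<in> G} = A - G" by auto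
  also have "card (A - G) = card A - card G"
    using assms by (simp add: card_Diff_subset finite_subset)
  finally show ?thesis .
qed

lemma erA_union:
  assumes "finite A" "E \<subseteq> G" "G \<subseteq> A" "0 \<le> p" "p \<le> 1"
  shows "measure_pmf.prob (erA A p) {G0. G0 \<union> E = G}
       = p ^ (card G - card E) * (1 - p) ^ (card A - card G)"
proof -
  have pre: "(\<lambda>f. {e \<in> A. f e}) -` {G0. G0 \<union> E = G} = Pi A (\<lambda>e. if e \<in> E then UNIV else {e \<in> G})"
    using assms(2,3) by (auto simp: Pi_def split: if_splits)
  have "measure_pmf.prob (erA A p) {G0. G0 \<union> E = G}
      = (\<Prod>e\<in>A. measure_pmf.prob (bernoulli_pmf p) (if e \<in> E then UNIV else {e \<in> G}))"
    unfolding erA_def measure_map_pmf pre by (rule measure_Pi_pmf_Pi[OF assms(1)])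
  also have "\<dots> = (\<Prod>e\<in>A. if e \<in> G - E then p else if e \<in> A - G then 1 - p else 1)"
    using assms(2) by (intro prod.cong) (auto simp: bern_meas[OF assms(4,5)])
  also have "\<dots> = p ^ card (G - E) * (1 - p) ^ card (A - G)"
  proof -
    have e1: "{e \<in> G. e \<notin> E} = G - E" by auto
    have e2: "{e. e \<notin> G} \<inter> (A \<inter> - {e \<in> G. e \<notin> E}) = A - G" using assms(3) by auto
    have e3: "A \<inter> {x. x \<in> G - E} = G - E" using assms(3) by auto
    have e4: "A \<inter> (G - E) = G - E" using assms(3) by auto
    have e5: "A \<inter> (- G \<union> E) \<inter> {e. e \<notin> G} = A - G" using assms(2) by auto
    show ?thesis using assms(1) by (simp add: prod.If_cases e3 Int_assoc[symmetric]) (simp add: e1 e2 e4 e5)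
  qed
  also have "card (G - E) = card G - card E"
    using assms by (simp add: card_Diff_subset finite_subset)
  also have "card (A - G) = card A - card G"
    using assms by (simp add: card_Diff_subset finite_subset)
  finally show ?thesis .
qed

lemma erA_sup:
  assumes "finite A" "D \<subseteq> A" "0 \<le> p" "p \<le> 1"
  shows "measure_pmf.prob (erA A p) {G. D \<subseteq> G} = p ^ card D"
proof -
  have pre: "(\<lambda>f. {e \<in> A. f e}) -` {G. D \<subseteq> G} = Pi A (\<lambda>e. if e \<in> D then {True} else UNIV)"
    using assms(2) by (auto simp: Pi_def split: if_splits)
  have "measure_pmf.prob (erA A p) {G. D \<subseteq> G}
      = (\<Prod>e\<in>A. measure_pmf.prob (bernoulli_pmf p) (if e \<in> D then {True} else UNIV))"
    unfolding erA_def measure_map_pmf pre by (rule measure_Pi_pmf_Pi[OF assms(1)])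
  also have "\<dots> = (\<Prod>e\<in>A. if e \<in> D then p else 1)"
    by (rule prod.cong) (auto simp: bern_meas[OF assms(3,4)])
  also have "\<dots> = p ^ card D"
    using assms(1,2) by (simp add: prod.If_cases Int_absorb1 Int_commute[of A] Int_absorb2)
  finally show ?thesis .
qed


lemma all_edges_Pow: "all_edges n \<subseteq> Pow {..<n}"
  unfolding all_edges_def by auto

lemma finite_all_edges: "finite (all_edges n)"
  by (rule finite_subset[OF all_edges_Pow]) auto

lemma path_edges_alt: "path_edges xs = (\<lambda>l. {xs ! l, xs ! (l + 1)}) ` {..<length xs - 1}"
  unfolding path_edges_def by auto

lemma path_edges_sub: "xs \<in> seqs n K \<Longrightarrow> path_edges xs \<subseteq> all_edges n"
  unfolding path_edges_def seqs_def all_edges_def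
  by (auto simp: nth_eq_iff_index_eq) (metis Suc_eq_plus1 Suc_lessD lessThan_iff nth_eq_iff_index_eq nth_mem n_not_Suc_n subsetD)

lemma card_path_edges:
  assumes "distinct xs"
  shows "card (path_edges xs) = length xs - 1"
proof -
  have "inj_on (\<lambda>l. {xs ! l, xs ! (l + 1)}) {..<length xs - 1}"
  proof (rule inj_onI)
    fix l m assume l: "l \<in> {..<length xs - 1}" and m: "m \<in> {..<length xs - 1}"
      and eq: "{xs ! l, xs ! (l + 1)} = {xs ! m, xs ! (m + 1)}"
    have d: "\<And>i j. i < length xs \<Longrightarrow> j < length xs \<Longrightarrow> xs ! i = xs ! j \<longleftrightarrow> i = j"
      using assms by (simp add: nth_eq_iff_index_eq)
    from eq have "(xs ! l = xs ! m \<and> xs ! (l+1) = xs ! (m+1)) \<or> (xs ! l = xs ! (m+1) \<and> xs ! (l+1) = xs ! m)"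
      by (auto simp: doubleton_eq_iff)
    then show "l = m" using l m d by auto
  qed
  then show ?thesis unfolding path_edges_alt by (simp add: card_image)
qed

lemma finite_seqs: "finite (seqs n K)"
proof -
  have "seqs n K \<subseteq> {xs. set xs \<subseteq> {..<n} \<and> length xs = K}" unfolding seqs_def by auto
  then show ?thesis by (rule finite_subset) (rule finite_lists_length_eq, simp)
qed

lemma prod_desc: "(K::nat) \<le> (n::nat) \<Longrightarrow> (\<Prod>i<K. n - i) = \<Prod>{n - K + 1 .. n}"
proof (induction K)
  case 0 then show ?case by simp
next
  case (Suc K)
  have "\<Prod>{n - Suc K + 1 .. n} = (n - K) * \<Prod>{n - K + 1 .. n}"
  proof -
    have a: "n - Suc K + 1 = n - K" using Suc.prems by simp
    have "\<Prod>{n - K .. n} = (n - K) * \<Prod>{Suc (n - K) .. n}"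
      by (rule prod.atLeast_Suc_atMost) simp
    then show ?thesis unfolding a by simp
  qed
  then show ?case using Suc by simp
qed

lemma card_seqs: "K \<le> n \<Longrightarrow> card (seqs n K) = (\<Prod>i<K. n - i)"
  unfolding seqs_def using card_lists_distinct_length_eq[of "{..<n}" K] by (simp add: prod_desc)

lemma K_paths_alt: "K_paths n K G = {xs \<in> seqs n K. path_edges xs \<subseteq> G}"
  unfolding K_paths_def path_edges_def seqs_def by auto

lemma path_edges_map: "path_edges (map f xs) = image f ` path_edges xs"
  unfolding path_edges_alt image_image length_map by (rule image_cong) auto

lemma id_seq: "K \<le> n \<Longrightarrow> [0..<K] \<in> seqs n K"
  unfolding seqs_def by auto


lemma extend_perm:
  assumes "\<sigma> \<in> seqs n K" "K \<le> n"
  obtains \<pi> where "inj_on \<pi> {..<n}" "\<pi> ` {..<n} \<subseteq> {..<n}" "map \<pi> [0..<K] = \<sigma>"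
proof -
  have len: "length \<sigma> = K" and dist: "distinct \<sigma>" and sub: "set \<sigma> \<subseteq> {..<n}"
    using assms(1) unfolding seqs_def by auto
  have cR: "card ({..<n} - {..<K}) = n - K" using assms(2) by (simp add: card_Diff_subset)
  have cT: "card ({..<n} - set \<sigma>) = n - K" using sub dist len by (simp add: card_Diff_subset distinct_card)
  obtain h where h: "bij_betw h ({..<n} - {..<K}) ({..<n} - set \<sigma>)"
    using finite_same_card_bij[of "{..<n} - {..<K}" "{..<n} - set \<sigma>"] cR cT by auto
  define \<pi> where "\<pi> x = (if x < K then \<sigma> ! x else h x)" for x
  have hin: "\<And>x. x < n \<Longrightarrow> \<not> x < K \<Longrightarrow> h x < n \<and> h x \<notin> set \<sigma>"
    using h unfolding bij_betw_def by auto
  have "inj_on \<pi> {..<n}"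
  proof (rule inj_onI)
    fix x y assume x: "x \<in> {..<n}" and y: "y \<in> {..<n}" and e: "\<pi> x = \<pi> y"
    show "x = y"
    proof (cases "x < K"; cases "y < K")
      assume "x < K" "y < K" then show ?thesis using e dist len by (simp add: \<pi>_def nth_eq_iff_index_eq)
    next
      assume "x < K" "\<not> y < K" then show ?thesis using e hin[of y] y len by (auto simp: \<pi>_def) (metis nth_mem)
    next
      assume "\<not> x < K" "y < K" then show ?thesis using e hin[of x] x len by (auto simp: \<pi>_def)
    next
      assume "\<not> x < K" "\<not> y < K" then show ?thesis using e x y h unfolding bij_betw_def inj_on_def \<pi>_def by auto
    qed
  qed
  moreover have "\<pi> ` {..<n} \<subseteq> {..<n}"
    using hin sub len by (auto simp: \<pi>_def) (meson lessThan_iff nth_mem subsetD)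
  moreover have "map \<pi> [0..<K] = \<sigma>"
    using len by (intro nth_equalityI) (auto simp: \<pi>_def)
  ultimately show ?thesis using that by blast
qed

lemma sym_sum:
  assumes "\<sigma> \<in> seqs n K" "K \<le> n"
  shows "(\<Sum>\<tau>\<in>seqs n K. f (card (path_edges \<sigma> \<inter> path_edges \<tau>)))
       = (\<Sum>\<tau>\<in>seqs n K. f (card (path_edges [0..<K] \<inter> path_edges \<tau>)))"
proof -
  obtain \<pi> where inj: "inj_on \<pi> {..<n}" and into: "\<pi> ` {..<n} \<subseteq> {..<n}" and m: "map \<pi> [0..<K] = \<sigma>"
    using extend_perm[OF assms] by blast
  let ?S = "seqs n K"
  have mapS: "map \<pi> \<tau> \<in> ?S" if "\<tau> \<in> ?S" for \<tau>
  proof -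
    have "inj_on \<pi> (set \<tau>)" using that inj unfolding seqs_def by (auto intro: inj_on_subset)
    then show ?thesis using that into unfolding seqs_def by (auto simp: distinct_map)
  qed
  have injS: "inj_on (map \<pi>) ?S"
  proof (rule inj_onI)
    fix x y assume "x \<in> ?S" "y \<in> ?S" "map \<pi> x = map \<pi> y"
    moreover have "inj_on \<pi> (set x \<union> set y)" using \<open>x \<in> ?S\<close> \<open>y \<in> ?S\<close> inj unfolding seqs_def
      by (auto intro: inj_on_subset)
    ultimately show "x = y" using inj_on_map_eq_map by blast
  qed
  have imS: "map \<pi> ` ?S = ?S"
    by (rule card_subset_eq[OF finite_seqs]) (use mapS injS in \<open>auto simp: card_image\<close>)
  have sub: "path_edges \<tau> \<subseteq> Pow {..<n}" if "\<tau> \<in> ?S" for \<tau>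
    using path_edges_sub[OF that] all_edges_Pow by blast
  have injP: "inj_on (image \<pi>) (Pow {..<n})" by (rule inj_on_image_Pow[OF inj])
  have "(\<Sum>\<tau>\<in>?S. f (card (path_edges \<sigma> \<inter> path_edges \<tau>)))
      = (\<Sum>\<tau>\<in>map \<pi> ` ?S. f (card (path_edges \<sigma> \<inter> path_edges \<tau>)))" by (simp add: imS)
  also have "\<dots> = (\<Sum>\<tau>\<in>?S. f (card (path_edges \<sigma> \<inter> path_edges (map \<pi> \<tau>))))"
    by (subst sum.reindex[OF injS]) simp
  also have "\<dots> = (\<Sum>\<tau>\<in>?S. f (card (path_edges [0..<K] \<inter> path_edges \<tau>)))"
  proof (rule sum.cong[OF refl])
    fix \<tau> assume t: "\<tau> \<in> ?S"
    have z: "[0..<K] \<in> ?S" using assms(2) by (rule id_seq)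
    have "path_edges \<sigma> \<inter> path_edges (map \<pi> \<tau>) = image \<pi> ` (path_edges [0..<K] \<inter> path_edges \<tau>)"
      unfolding m[symmetric] path_edges_map
      by (rule inj_on_image_Int[OF injP sub[OF z] sub[OF t], symmetric])
    moreover have "inj_on (image \<pi>) (path_edges [0..<K] \<inter> path_edges \<tau>)"
      using injP sub[OF t] by (blast intro: inj_on_subset)
    ultimately show "f (card (path_edges \<sigma> \<inter> path_edges (map \<pi> \<tau>))) = f (card (path_edges [0..<K] \<inter> path_edges \<tau>))"
      by (simp add: card_image)
  qed
  finally show ?thesis .
qed


theorem lemma2:
  fixes n K :: nat and lam :: real
  assumes "1 \<le> K" and "K \<le> n" and "0 < lam" and "lam < real n"
  shows "(\<forall>G. G \<subseteq> all_edges n \<longrightarrow>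
            LR n K lam G =
              1 / real (\<Prod>i<K. n - i) * real (card (K_paths n K G))
                * (lam / real n) powi (- (int K - 1)))
       \<and> measure_pmf.expectation (P0 n lam) (\<lambda>G. (LR n K lam G)^2) =
         measure_pmf.expectation (pmf_of_set (seqs n K))
           (\<lambda>\<pi>. (real n / lam) ^ card (path_edges [0..<K] \<inter> path_edges \<pi>))"
proof -
  define p where "p = lam / real n"
  define A where "A = all_edges n"
  define S where "S = seqs n K"
  define c where "c = real (card S)"
  define k where "k = K - 1"
  have n0: "0 < real n" using assms by linarith
  have p0: "0 < p" using assms n0 by (simp add: p_def)
  have p1: "p < 1" using assms n0 by (simp add: p_def)
  have finA: "finite A" unfolding A_def by (rule finite_all_edges)
  have P0e: "P0 n lam = erA A p" by (simp add: P0_def er_graph_def erA_def A_def p_def)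
  have finS: "finite S" unfolding S_def by (rule finite_seqs)
  have z: "[0..<K] \<in> S" unfolding S_def using assms(2) by (rule id_seq)
  have Sne: "S \<noteq> {}" using z by auto
  have cE: "c = real (\<Prod>i<K. n - i)" unfolding c_def S_def using card_seqs[OF assms(2)] by simp
  have cpos: "c > 0" unfolding c_def using finS Sne by (simp add: card_gt_0_iff)
  have supp: "set_pmf (erA A p) \<subseteq> Pow A" unfolding erA_def by auto
  have finsupp: "finite (set_pmf (erA A p))" using supp finA by (meson finite_Pow_iff finite_subset)
  have ES: "path_edges \<sigma> \<subseteq> A" if "\<sigma> \<in> S" for \<sigma> using path_edges_sub that unfolding S_def A_def by blast
  have cES: "card (path_edges \<sigma>) = k" if "\<sigma> \<in> S" for \<sigma>
    using card_path_edges[of \<sigma>] that unfolding S_def seqs_def k_def by auto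
  have P1e: "P1 n K lam = pmf_of_set S \<bind> (\<lambda>\<sigma>. map_pmf (\<lambda>G0. G0 \<union> path_edges \<sigma>) (erA A p))"
  proof -
    have "P1 n K lam = erA A p \<bind> (\<lambda>G0. pmf_of_set S \<bind> (\<lambda>\<sigma>. return_pmf (G0 \<union> path_edges \<sigma>)))"
      by (simp add: P1_def er_graph_def erA_def A_def p_def S_def)
    then show ?thesis by (simp add: bind_commute_pmf[of "erA A p"] map_pmf_def)
  qed
  have pmfP1: "pmf (P1 n K lam) G = (\<Sum>\<sigma>\<in>S. if path_edges \<sigma> \<subseteq> G then p ^ (card G - k) * (1 - p) ^ (card A - card G) else 0) / c"
    if G: "G \<subseteq> A" for G
  proof -
    have "pmf (P1 n K lam) G = (\<Sum>\<sigma>\<in>S. measure_pmf.prob (erA A p) {G0. G0 \<union> path_edges \<sigma> = G}) / c"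
      unfolding P1e pmf_bind integral_pmf_of_set[OF Sne finS] pmf_map c_def
      by (simp add: vimage_def)
    also have "\<dots> = (\<Sum>\<sigma>\<in>S. if path_edges \<sigma> \<subseteq> G then p ^ (card G - k) * (1 - p) ^ (card A - card G) else 0) / c"
    proof -
      have "measure_pmf.prob (erA A p) {G0. G0 \<union> path_edges \<sigma> = G} = (if path_edges \<sigma> \<subseteq> G then p ^ (card G - k) * (1 - p) ^ (card A - card G) else 0)"
        if s: "\<sigma> \<in> S" for \<sigma>
      proof (cases "path_edges \<sigma> \<subseteq> G")
        case True
        then show ?thesis using erA_union[OF finA True G] p0 p1 cES[OF s] by simp
      next
        case False
        then have "{G0. G0 \<union> path_edges \<sigma> = G} = {}" by auto
        then show ?thesis using False by simp
      qed
      then show ?thesis by (simp cong: sum.cong)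
    qed
    finally show ?thesis .
  qed
  have KP: "K_paths n K G = {\<sigma> \<in> S. path_edges \<sigma> \<subseteq> G}" for G
    unfolding S_def by (rule K_paths_alt)
  have LRform: "LR n K lam G = real (card (K_paths n K G)) / (c * p ^ k)" if G: "G \<subseteq> A" for G
  proof -
    define Q where "Q = (1 - p) ^ (card A - card G)"
    have Q0: "Q > 0" unfolding Q_def using p1 by simp
    have sumc: "(\<Sum>\<sigma>\<in>S. if path_edges \<sigma> \<subseteq> G then p ^ (card G - k) * Q else 0)
        = real (card (K_paths n K G)) * (p ^ (card G - k) * Q)"
      unfolding KP using finS by (simp add: sum.inter_filter[symmetric])
    have P0G: "pmf (P0 n lam) G = p ^ card G * Q"
      unfolding P0e Q_def using erA_single[OF finA G] p0 p1 by simp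
    show ?thesis
    proof (cases "K_paths n K G = {}")
      case True
      then show ?thesis unfolding LR_def pmfP1[OF G] Q_def[symmetric] sumc by simp
    next
      case False
      then obtain \<sigma> where "\<sigma> \<in> S" "path_edges \<sigma> \<subseteq> G" unfolding KP by auto
      then have "k \<le> card G" using cES card_mono[OF finite_subset[OF G finA]] by metis
      then have pg: "p ^ card G = p ^ (card G - k) * p ^ k" by (simp flip: power_add)
      show ?thesis unfolding LR_def pmfP1[OF G] Q_def[symmetric] sumc P0G pg
        using Q0 p0 cpos by (simp add: field_simps)
    qed
  qed
  have part1: "\<forall>G. G \<subseteq> all_edges n \<longrightarrow>
            LR n K lam G =
              1 / real (\<Prod>i<K. n - i) * real (card (K_paths n K G))
                * (lam / real n) powi (- (int K - 1))"
  proof (intro allI impI)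
    fix G assume "G \<subseteq> all_edges n"
    then have G: "G \<subseteq> A" unfolding A_def .
    have "int K - 1 = int k" unfolding k_def using assms(1) by simp
    then have "(lam / real n) powi (- (int K - 1)) = inverse (p ^ k)"
      unfolding p_def by (simp add: power_int_minus)
    then show "LR n K lam G = 1 / real (\<Prod>i<K. n - i) * real (card (K_paths n K G)) * (lam / real n) powi (- (int K - 1))"
      unfolding LRform[OF G] cE[symmetric] by (simp add: field_simps)
  qed
  define ind where "ind \<sigma> G = (indicator {G. path_edges \<sigma> \<subseteq> G} G :: real)" for \<sigma> G
  have cardKP: "real (card (K_paths n K G)) = (\<Sum>\<sigma>\<in>S. ind \<sigma> G)" for G
  proof -
    have "{\<sigma> \<in> S. path_edges \<sigma> \<subseteq> G} = S \<inter> {\<sigma>. path_edges \<sigma> \<subseteq> G}" by auto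
    then show ?thesis unfolding KP ind_def using finS by (simp add: indicator_def sum.inter_filter[symmetric])
  qed
  have "measure_pmf.expectation (P0 n lam) (\<lambda>G. (LR n K lam G)^2)
      = measure_pmf.expectation (erA A p) (\<lambda>G. (\<Sum>\<sigma>\<in>S. \<Sum>\<tau>\<in>S. indicator {G. path_edges \<sigma> \<union> path_edges \<tau> \<subseteq> G} G) / (c * p ^ k)^2)"
    unfolding P0e
  proof (intro integral_cong_AE)
    show "AE G in measure_pmf (erA A p). (LR n K lam G)^2 = (\<Sum>\<sigma>\<in>S. \<Sum>\<tau>\<in>S. indicator {G. path_edges \<sigma> \<union> path_edges \<tau> \<subseteq> G} G) / (c * p ^ k)^2"
    proof (rule AE_pmfI)
      fix G assume "G \<in> set_pmf (erA A p)"
      then have G: "G \<subseteq> A" using supp by auto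
      have "(\<Sum>\<sigma>\<in>S. ind \<sigma> G)^2 = (\<Sum>\<sigma>\<in>S. \<Sum>\<tau>\<in>S. ind \<sigma> G * ind \<tau> G)"
        by (simp add: power2_eq_square sum_product)
      also have "\<dots> = (\<Sum>\<sigma>\<in>S. \<Sum>\<tau>\<in>S. indicator {G. path_edges \<sigma> \<union> path_edges \<tau> \<subseteq> G} G)"
        by (intro sum.cong refl) (simp add: ind_def indicator_def)
      finally show "(LR n K lam G)^2 = (\<Sum>\<sigma>\<in>S. \<Sum>\<tau>\<in>S. indicator {G. path_edges \<sigma> \<union> path_edges \<tau> \<subseteq> G} G) / (c * p ^ k)^2"
        unfolding LRform[OF G] cardKP by (simp add: power_divide)
    qed
  qed simp_all
  also have "\<dots> = (\<Sum>\<sigma>\<in>S. \<Sum>\<tau>\<in>S. measure_pmf.prob (erA A p) {G. path_edges \<sigma> \<union> path_edges \<tau> \<subseteq> G}) / (c * p ^ k)^2"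
    using finsupp by (simp add: integrable_measure_pmf_finite)
  also have "\<dots> = (\<Sum>\<sigma>\<in>S. \<Sum>\<tau>\<in>S. (real n / lam) ^ card (path_edges \<sigma> \<inter> path_edges \<tau>)) / c^2"
  proof -
    have "measure_pmf.prob (erA A p) {G. path_edges \<sigma> \<union> path_edges \<tau> \<subseteq> G} / (c * p ^ k)^2
        = (real n / lam) ^ card (path_edges \<sigma> \<inter> path_edges \<tau>) / c^2"
      if s: "\<sigma> \<in> S" and t: "\<tau> \<in> S" for \<sigma> \<tau>
    proof -
      have fin: "finite (path_edges \<sigma>)" "finite (path_edges \<tau>)"
        using ES[OF s] ES[OF t] finA by (auto intro: finite_subset)
      have cu: "card (path_edges \<sigma> \<union> path_edges \<tau>) + card (path_edges \<sigma> \<inter> path_edges \<tau>) = k + k"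
        using card_Un_Int[OF fin] cES[OF s] cES[OF t] by simp
      have "p ^ card (path_edges \<sigma> \<union> path_edges \<tau>) * p ^ card (path_edges \<sigma> \<inter> path_edges \<tau>) = (p ^ k)^2"
        by (simp add: cu flip: power_add) (simp add: power2_eq_square power_add)
      moreover have "real n / lam = 1 / p" unfolding p_def using n0 assms(3) by simp
      moreover have "measure_pmf.prob (erA A p) {G. path_edges \<sigma> \<union> path_edges \<tau> \<subseteq> G} = p ^ card (path_edges \<sigma> \<union> path_edges \<tau>)"
        using ES[OF s] ES[OF t] p0 p1 by (intro erA_sup[OF finA]) auto
      ultimately show ?thesis
      proof -
        assume h: "p ^ card (path_edges \<sigma> \<union> path_edges \<tau>) * p ^ card (path_edges \<sigma> \<inter> path_edges \<tau>) = (p ^ k)^2"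
          "real n / lam = 1 / p" "measure_pmf.prob (erA A p) {G. path_edges \<sigma> \<union> path_edges \<tau> \<subseteq> G} = p ^ card (path_edges \<sigma> \<union> path_edges \<tau>)"
        define u where "u = p ^ card (path_edges \<sigma> \<union> path_edges \<tau>)"
        define i where "i = p ^ card (path_edges \<sigma> \<inter> path_edges \<tau>)"
        have u0: "u > 0" "i > 0" unfolding u_def i_def using p0 by auto
        have "(c * p ^ k)^2 = c^2 * (u * i)" using h(1) unfolding u_def i_def by (simp add: power_mult_distrib)
        moreover have "(real n / lam) ^ card (path_edges \<sigma> \<inter> path_edges \<tau>) = 1 / i"
          unfolding h(2) i_def by (simp add: power_one_over)
        ultimately show ?thesis unfolding h(3) u_def[symmetric] using u0 cpos n0 by (simp add: field_simps power2_eq_square)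
      qed
    qed
    then show ?thesis by (simp add: sum_divide_distrib cong: sum.cong)
  qed
  also have "\<dots> = (\<Sum>\<sigma>\<in>S. \<Sum>\<tau>\<in>S. (real n / lam) ^ card (path_edges [0..<K] \<inter> path_edges \<tau>)) / c^2"
  proof -
    have "(\<Sum>\<sigma>\<in>S. \<Sum>\<tau>\<in>S. (real n / lam) ^ card (path_edges \<sigma> \<inter> path_edges \<tau>))
       = (\<Sum>\<sigma>\<in>S. \<Sum>\<tau>\<in>S. (real n / lam) ^ card (path_edges [0..<K] \<inter> path_edges \<tau>))"
      by (rule sum.cong[OF refl]) (use sym_sum[OF _ assms(2)] in \<open>simp add: S_def\<close>)
    then show ?thesis by simp
  qed
  also have "\<dots> = measure_pmf.expectation (pmf_of_set (seqs n K))
           (\<lambda>\<pi>. (real n / lam) ^ card (path_edges [0..<K] \<inter> path_edges \<pi>))"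
    unfolding S_def[symmetric] integral_pmf_of_set[OF Sne finS] c_def using cpos unfolding c_def
    by (simp add: power2_eq_square)
  finally show ?thesis using part1 by blast
qed

end
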